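(* For every $d\ge1$, $\mathsf{L}(\mathcal{A}^d)\le10^d$.
   Context: $\mathcal{A}:\{0,1\}^4\to\{0,1\}$ is the function with $\mathcal{A}(x)=1$ iff $x_1\le x_2\le x_3\le x_4$ or $x_1\ge x_2\ge x_3\ge x_4$. For $f:\{0,1\}^n\to\{0,1\}$, its $d$th iteration $f^d:\{0,1\}^{n^d}\to\{0,1\}$ is defined by $f^1=f$ and $f^{d+1}(x)=f\big(f^d(x_1,\dots,x_{n^d}),\ \dots,\ f^d(x_{(n-1)n^d+1},\dots,x_{n^{d+1}})\big)$, the $j$th argument being $f^d$ applied to the $j$th consecutive block of $n^d$ bits. $\mathsf{L}(f)$ is the minimum number of leaves of a formula (binary tree with internal nodes labeled $\wedge,\vee$ and leaves labeled by literals $x_i,\neg x_i$) computing $f$. *)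

theory Defs
  imports Main
begin

text \<open>Boolean functions f : {0,1}^N -> {0,1} are represented as predicates on
  assignments x :: nat => bool, of which only the coordinates 0..N-1 matter
  (coordinate i corresponds to x_(i+1) in the paper).\<close>

datatype formula = Lit nat bool | And formula formula | Or formula formula

fun eval :: "formula \<Rightarrow> (nat \<Rightarrow> bool) \<Rightarrow> bool" where
  "eval (Lit i b) x = (if b then x i else \<not> x i)"
| "eval (And p q) x = (eval p x \<and> eval q x)"
| "eval (Or p q) x = (eval p x \<or> eval q x)"

fun vars :: "formula \<Rightarrow> nat set" where
  "vars (Lit i b) = {i}"
| "vars (And p q) = vars p \<union> vars q"
| "vars (Or p q) = vars p \<union> vars q"

fun leaves :: "formula \<Rightarrow> nat" where
  "leaves (Lit i b) = 1"
| "leaves (And p q) = leaves p + leaves q"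
| "leaves (Or p q) = leaves p + leaves q"

definition computes :: "nat \<Rightarrow> formula \<Rightarrow> ((nat \<Rightarrow> bool) \<Rightarrow> bool) \<Rightarrow> bool" where
  "computes N \<phi> f \<longleftrightarrow> (\<forall>i\<in>vars \<phi>. i < N) \<and> (\<forall>x. eval \<phi> x = f x)"

definition formula_size :: "nat \<Rightarrow> ((nat \<Rightarrow> bool) \<Rightarrow> bool) \<Rightarrow> nat" where
  "formula_size N f = (LEAST s. \<exists>\<phi>. computes N \<phi> f \<and> leaves \<phi> = s)"

definition funA :: "(nat \<Rightarrow> bool) \<Rightarrow> bool" where
  "funA x \<longleftrightarrow> (x 0 \<le> x 1 \<and> x 1 \<le> x 2 \<and> x 2 \<le> x 3) \<or> (x 0 \<ge> x 1 \<and> x 1 \<ge> x 2 \<and> x 2 \<ge> x 3)"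

fun iter :: "((nat \<Rightarrow> bool) \<Rightarrow> bool) \<Rightarrow> nat \<Rightarrow> nat \<Rightarrow> (nat \<Rightarrow> bool) \<Rightarrow> bool" where
  "iter f n (Suc 0) x = f x"
| "iter f n (Suc (Suc d)) x = f (\<lambda>j. iter f n (Suc d) (\<lambda>i. x (j * n ^ Suc d + i)))"
| "iter f n 0 x = undefined"

end

theory Submission
  imports Defs
begin

fun shift :: "nat \<Rightarrow> formula \<Rightarrow> formula" where
  "shift k (Lit i b) = Lit (k + i) b"
| "shift k (And p q) = And (shift k p) (shift k q)"
| "shift k (Or p q) = Or (shift k p) (shift k q)"

fun dual :: "formula \<Rightarrow> formula" where
  "dual (Lit i b) = Lit i (\<not> b)"
| "dual (And p q) = Or (dual p) (dual q)"
| "dual (Or p q) = And (dual p) (dual q)"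

fun subst :: "(nat \<Rightarrow> bool \<Rightarrow> formula) \<Rightarrow> formula \<Rightarrow> formula" where
  "subst g (Lit i b) = g i b"
| "subst g (And p q) = And (subst g p) (subst g q)"
| "subst g (Or p q) = Or (subst g p) (subst g q)"

lemma eval_shift: "eval (shift k p) x = eval p (\<lambda>i. x (k + i))"
  by (induction p) auto

lemma vars_shift: "vars (shift k p) = (\<lambda>i. k + i) ` vars p"
  by (induction p) auto

lemma leaves_shift: "leaves (shift k p) = leaves p"
  by (induction p) auto

lemma eval_dual: "eval (dual p) x = (\<not> eval p x)"
  by (induction p) auto

lemma vars_dual: "vars (dual p) = vars p"
  by (induction p) auto

lemma leaves_dual: "leaves (dual p) = leaves p"
  by (induction p) auto

lemma eval_subst:
  assumes "\<And>i. eval (g i False) x = (\<not> eval (g i True) x)"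
  shows "eval (subst g p) x = eval p (\<lambda>i. eval (g i True) x)"
  proof (induction p)
  case (Lit i b)
  then show ?case using assms by (cases b) auto
qed auto

lemma leaves_subst:
  assumes "\<And>i b. leaves (g i b) \<le> M"
  shows "leaves (subst g p) \<le> M * leaves p"
  using assms by (induction p) (auto simp: algebra_simps)

lemma vars_subst: "vars (subst g p) \<subseteq> (\<Union>j\<in>vars p. \<Union>b. vars (g j b))"
  by (induction p) auto

definition Aform :: formula where
  "Aform = Or (And (Lit 0 True) (And (Lit 1 True) (Lit 2 True)))
     (And (Or (Lit 0 False) (Lit 3 False))
          (Or (And (Lit 2 True) (Lit 3 True))
              (And (Lit 2 False) (Or (Lit 0 True) (Lit 1 False)))))"

lemma Aform_eval: "eval Aform x = funA x"
  unfolding Aform_def funA_def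
  by (cases "x 0"; cases "x 1"; cases "x 2"; cases "x 3") auto

lemma Aform_vars: "vars Aform \<subseteq> {..<4}"
  unfolding Aform_def by auto

lemma Aform_leaves: "leaves Aform = 10"
  unfolding Aform_def by simp

lemma key: "\<exists>\<phi>. computes (4 ^ Suc d) \<phi> (iter funA 4 (Suc d)) \<and> leaves \<phi> \<le> 10 ^ Suc d"
proof (induction d)
  case 0
  show ?case
    by (rule exI[of _ Aform]) (use Aform_eval Aform_vars Aform_leaves in \<open>auto simp: computes_def\<close>)
next
  case (Suc d)
  then obtain \<phi> where c: "computes (4 ^ Suc d) \<phi> (iter funA 4 (Suc d))"
    and l: "leaves \<phi> \<le> 10 ^ Suc d" by blast
  define N :: nat where "N = 4 ^ Suc d"
  define g where "g = (\<lambda>j b. shift (j * N) (if b then \<phi> else dual \<phi>))"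
  have ev: "eval (subst g Aform) x = iter funA 4 (Suc (Suc d)) x" for x
  proof -
    have "eval (subst g Aform) x = eval Aform (\<lambda>i. eval (g i True) x)"
      by (rule eval_subst) (simp add: g_def eval_dual eval_shift)
    also have "\<dots> = funA (\<lambda>j. iter funA 4 (Suc d) (\<lambda>i. x (j * N + i)))"
      using c by (simp add: Aform_eval g_def eval_shift computes_def)
    finally show ?thesis by (simp add: N_def)
  qed
  have lv: "leaves (subst g Aform) \<le> 10 ^ Suc (Suc d)"
  proof -
    have "leaves (subst g Aform) \<le> 10 ^ Suc d * leaves Aform"
      by (rule leaves_subst) (use l in \<open>simp add: g_def leaves_shift leaves_dual\<close>)
    then show ?thesis by (simp add: Aform_leaves)
  qed
  have vs: "\<forall>i\<in>vars (subst g Aform). i < 4 ^ Suc (Suc d)"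
  proof
    fix i assume "i \<in> vars (subst g Aform)"
    then obtain j b where j: "j \<in> vars Aform" and ib: "i \<in> vars (g j b)"
      using vars_subst by blast
    from j Aform_vars have j3: "j \<le> 3" by auto
    from ib obtain k where k: "k \<in> vars \<phi>" and ik: "i = j * N + k"
      by (auto simp: g_def vars_shift vars_dual split: if_splits)
    from k c have "k < N" by (auto simp: computes_def N_def)
    with j3 have "j * N + k < 3 * N + N"
      by (metis add_le_less_mono mult_le_mono1)
    then show "i < 4 ^ Suc (Suc d)" by (simp add: ik N_def)
  qed
  show ?case using ev lv vs by (auto simp: computes_def)
qed

theorem mainTheorem17:
  fixes d :: nat
  assumes "d \<ge> 1"
  shows "formula_size (4 ^ d) (iter funA 4 d) \<le> 10 ^ d"
proof -
  obtain e where d: "d = Suc e" using assms by (cases d) auto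
  obtain \<phi> where "computes (4 ^ d) \<phi> (iter funA 4 d)" and l: "leaves \<phi> \<le> 10 ^ d"
    using key[of e] d by blast
  then have "formula_size (4 ^ d) (iter funA 4 d) \<le> leaves \<phi>"
    unfolding formula_size_def by (intro Least_le) blast
  with l show ?thesis by simp
qed

end
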